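(* Let $b\in(0,1)$, $\phi\in(0,1)$ and $h_G>1$. Consider the set of solutions $(x,y)$ with $\tfrac12\le y\le x\le1$ of the system $$x=\frac{x^b(h_Gy+1-y)}{x^b(h_Gy+1-y)+(1-x)^b(y+h_G-h_Gy)},\qquad y=\phi x+\frac{1-\phi}{h_G+1}(h_Gy+1-y).$$ Let $\mathcal S=\{(\tfrac12,\tfrac12),\,(1,\frac{\phi h_G+1}{\phi h_G+2-\phi})\}$. If $0<b\le\frac{2}{\phi(h_G-1)+2}$, the solution set is $\mathcal S$; otherwise (i.e. $\frac{2}{\phi(h_G-1)+2}<b<1$) the solution set is $\mathcal S\cup\{(\hat x(\phi,h_G,b),\frac{\phi(h_G+1)\hat x(\phi,h_G,b)+1-\phi}{\phi h_G+2-\phi})\}$.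
   Context: For $0<b<1$ define $g(x,b)=\frac{x^{1-b}-(1-x)^{1-b}}{x(1-x)^{1-b}-(1-x)x^{1-b}}$ for $x\in(\tfrac12,1)$ and $g(\tfrac12,b)=\frac2b-2$. When $\frac{2}{\phi(h_G-1)+2}<b<1$, $\hat x(\phi,h_G,b)$ denotes the unique solution $x\in(\tfrac12,1)$ of $g(x,b)=\phi(h_G-1)$. *)

theory Defs
  imports Complex_Main
begin

definition g :: "real \<Rightarrow> real \<Rightarrow> real" where
  "g x b = (if x = 1/2 then 2/b - 2
            else (x powr (1-b) - (1-x) powr (1-b)) /
                 (x * (1-x) powr (1-b) - (1-x) * x powr (1-b)))"

text \<open>The unique solution x in the open interval (1/2,1) of g x b = phi (hG - 1),
  defined for 2/(phi (hG-1)+2) < b < 1.\<close>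
definition xhat :: "real \<Rightarrow> real \<Rightarrow> real \<Rightarrow> real" where
  "xhat phi hG b = (THE x. 1/2 < x \<and> x < 1 \<and> g x b = phi * (hG - 1))"

definition sol_set :: "real \<Rightarrow> real \<Rightarrow> real \<Rightarrow> (real \<times> real) set" where
  "sol_set b phi hG = {(x, y). 1/2 \<le> y \<and> y \<le> x \<and> x \<le> 1 \<and>
     x = x powr b * (hG * y + 1 - y) /
         (x powr b * (hG * y + 1 - y) + (1 - x) powr b * (y + hG - hG * y)) \<and>
     y = phi * x + (1 - phi) / (hG + 1) * (hG * y + 1 - y)}"

end

theory Submission
  imports Defs
begin

definition FF :: "real \<Rightarrow> real \<Rightarrow> real \<Rightarrow> real" where
  "FF a c t = t powr (a+1) + c * t powr a - c*t - 1"
definition FF1 :: "real \<Rightarrow> real \<Rightarrow> real \<Rightarrow> real" where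
  "FF1 a c t = (a+1) * t powr a + c * a * t powr (a-1) - c"
definition FF2 :: "real \<Rightarrow> real \<Rightarrow> real \<Rightarrow> real" where
  "FF2 a c t = a * t powr (a-2) * ((a+1)*t - c*(1-a))"

lemma dFF: "0 < t \<Longrightarrow> (FF a c has_real_derivative FF1 a c t) (at t)"
  unfolding FF_def[abs_def] FF1_def
  by (auto intro!: derivative_eq_intros simp: algebra_simps)

lemma dFF1: assumes t: "0 < t" shows "(FF1 a c has_real_derivative FF2 a c t) (at t)"
proof -
  have "t powr (a-1) = t powr (1 + (a-2))" by simp
  also have "\<dots> = t powr 1 * t powr (a-2)" by (rule powr_add)
  finally have e: "t powr (a - 1) = t * t powr (a-2)" using t by simp
  show ?thesis
    unfolding FF1_def[abs_def] FF2_def using t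
    apply (auto intro!: derivative_eq_intros)
    apply (simp add: e algebra_simps)
    done
qed

lemma FF_1: "FF a c 1 = 0" unfolding FF_def by simp
lemma FF1_1: "FF1 a c 1 = (1+a) - c*(1-a)" unfolding FF1_def by (simp add: algebra_simps)

lemma FF2_pos: "0 < a \<Longrightarrow> 0 < t \<Longrightarrow> c*(1-a) < (a+1)*t \<Longrightarrow> FF2 a c t > 0"
  unfolding FF2_def by simp
lemma FF2_neg: "0 < a \<Longrightarrow> 0 < t \<Longrightarrow> c*(1-a) > (a+1)*t \<Longrightarrow> FF2 a c t < 0"
  unfolding FF2_def by (simp add: mult_pos_neg)

lemma contFF: "0 < l \<Longrightarrow> continuous_on {l..u} (FF a c)"
  by (rule continuous_at_imp_continuous_on) (auto intro: DERIV_isCont[OF dFF])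
lemma contFF1: "0 < l \<Longrightarrow> continuous_on {l..u} (FF1 a c)"
  by (rule continuous_at_imp_continuous_on) (auto intro: DERIV_isCont[OF dFF1])

lemma FF_case1:
  assumes a0: "0 < a" and le: "c*(1-a) \<le> 1+a" and t: "1 < t"
  shows "FF a c t > 0"
proof -
  have p: "FF1 a c s > 0" if s: "1 < s" for s
  proof -
    have "FF1 a c 1 < FF1 a c s"
    proof (rule DERIV_pos_imp_increasing_open[OF s])
      fix x assume x: "1 < x" "x < s"
      have "(a+1)*1 < (a+1)*x" using x a0 by (intro mult_strict_left_mono) auto
      then have "c*(1-a) < (a+1)*x" using le by simp
      then show "\<exists>y. DERIV (FF1 a c) x :> y \<and> y > 0"
        using x a0 by (intro exI[of _ "FF2 a c x"]) (auto intro: dFF1 FF2_pos)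
    qed (rule contFF1, simp)
    then show ?thesis using FF1_1[of a c] le by simp
  qed
  have "FF a c 1 < FF a c t"
  proof (rule DERIV_pos_imp_increasing_open[OF t])
    fix x assume x: "1 < x" "x < t"
    then show "\<exists>y. DERIV (FF a c) x :> y \<and> y > 0"
      by (intro exI[of _ "FF1 a c x"]) (auto intro: dFF p)
  qed (rule contFF, simp)
  then show ?thesis by (simp add: FF_1)
qed

lemma FF_case2:
  assumes a0: "0 < a" and a1: "a < 1" and c1: "1 < c" and gt: "c*(1-a) > 1+a"
  shows "\<exists>!t. 1 < t \<and> FF a c t = 0"
proof -
  define t0 where "t0 = c*(1-a)/(a+1)"
  have t0: "1 < t0" using gt a0 by (simp add: t0_def field_simps)
  have t0e: "(a+1)*t0 = c*(1-a)" using a0 by (simp add: t0_def)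
  have n1: "FF1 a c s < 0" if s: "1 < s" "s \<le> t0" for s
  proof -
    have "FF1 a c 1 > FF1 a c s"
    proof (rule DERIV_neg_imp_decreasing_open[OF s(1)])
      fix x assume x: "1 < x" "x < s"
      have "(a+1)*x < (a+1)*t0" using x s a0 by (intro mult_strict_left_mono) auto
      then have "c*(1-a) > (a+1)*x" using t0e by simp
      then show "\<exists>y. DERIV (FF1 a c) x :> y \<and> y < 0"
        using x a0 by (intro exI[of _ "FF2 a c x"]) (auto intro: dFF1 FF2_neg)
    qed (rule contFF1, simp)
    then show ?thesis using FF1_1[of a c] gt by simp
  qed
  have n0: "FF a c s < 0" if s: "1 < s" "s \<le> t0" for s
  proof -
    have "FF a c 1 > FF a c s"
    proof (rule DERIV_neg_imp_decreasing_open[OF s(1)])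
      fix x assume x: "1 < x" "x < s"
      then show "\<exists>y. DERIV (FF a c) x :> y \<and> y < 0"
        using s by (intro exI[of _ "FF1 a c x"]) (auto intro: dFF n1)
    qed (rule contFF, simp)
    then show ?thesis by (simp add: FF_1)
  qed
  have inc: "FF1 a c u < FF1 a c v" if uv: "t0 \<le> u" "u < v" for u v
  proof (rule DERIV_pos_imp_increasing_open[OF uv(2)])
    fix x assume x: "u < x" "x < v"
    have "(a+1)*t0 < (a+1)*x" using x uv a0 by (intro mult_strict_left_mono) auto
    then have "c*(1-a) < (a+1)*x" using t0e by simp
    then show "\<exists>y. DERIV (FF1 a c) x :> y \<and> y > 0"
      using x a0 uv t0 by (intro exI[of _ "FF2 a c x"]) (auto intro: dFF1 FF2_pos)
  qed (rule contFF1, use uv t0 in simp)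
  define T where "T = (c+2) powr (1/a)"
  have Ta: "T powr a = c + 2" using a0 c1 by (simp add: T_def powr_powr)
  have Tpos: "T > 0" using c1 by (simp add: T_def)
  have "T powr (a+1) = T powr a * T powr 1" by (rule powr_add)
  then have Ta1: "T powr (a+1) = (c+2)*T" using Ta Tpos by simp
  have FT: "FF a c T > 0" unfolding FF_def Ta Ta1 using Tpos c1
    by (simp add: algebra_simps) (smt (verit) mult_pos_pos)
  have T1: "1 < T" using Ta a0 c1 Tpos
    by (smt (verit) powr_le1 powr_less_mono2 powr_one_eq_one)
  have Tt0: "t0 \<le> T"
  proof (rule ccontr)
    assume "\<not> t0 \<le> T" then have "FF a c T < 0" using n0 T1 by simp
    with FT show False by simp
  qed
  obtain r where r: "t0 \<le> r" "r \<le> T" "FF a c r = 0"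
    using IVT'[of "FF a c" t0 0 T] n0[of t0] t0 FT Tt0 contFF[of t0 T a c] by auto
  have uniq: False if r12: "1 < r1" "r1 < r2" "FF a c r1 = 0" "FF a c r2 = 0" for r1 r2
  proof -
    have r1: "t0 < r1" using n0[of r1] r12 by force
    obtain z where z: "t0 < z" "z < r1" "FF a c r1 - FF a c t0 = (r1 - t0) * FF1 a c z"
      using MVT2[OF r1, of "FF a c" "FF1 a c"] dFF t0 by force
    have "FF a c t0 < 0" using n0 t0 by simp
    then have fz: "FF1 a c z > 0" using z r12 r1
      by (smt (verit) zero_less_mult_pos)
    have "FF a c r1 < FF a c r2"
    proof (rule DERIV_pos_imp_increasing_open[OF r12(2)])
      fix x assume x: "r1 < x" "x < r2"
      have "FF1 a c z < FF1 a c x" using inc[of z x] z x by simp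
      then show "\<exists>y. DERIV (FF a c) x :> y \<and> y > 0"
        using x r12 fz by (intro exI[of _ "FF1 a c x"]) (auto intro: dFF)
    qed (rule contFF, use r12 in simp)
    then show False using r12 by simp
  qed
  show ?thesis
  proof (rule ex1I[of _ r])
    show "1 < r \<and> FF a c r = 0" using r t0 by simp
    fix s assume s: "1 < s \<and> FF a c s = 0"
    show "s = r"
    proof (rule linorder_cases[of s r])
      assume "s < r" then show ?thesis using uniq[of s r] s r t0 by simp
    next
      assume "r < s" then show ?thesis using uniq[of r s] s r t0 by simp
    qed
  qed
qed
lemma core_eq1:
  fixes x t u b A B K H :: real
  assumes u: "0 < u" and xt: "x = t*u" and tu: "(1+t)*u = 1" and t1: "1 < t"
    and b: "0 < b" "b < 1" and A: "0 < A" and B: "0 < B" and H: "0 < H" and K: "0 \<le> K"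
    and Ae: "(K+2)*A = H*(1+K*x)" and Be: "(K+2)*B = H*(1+K*u)"
  shows "(x = x powr b * A / (x powr b * A + u powr b * B)) \<longleftrightarrow> FF (1-b) (1+K) t = 0"
proof -
  define P where "P = t powr b"
  define Q where "Q = u powr b"
  define R where "R = t powr (1-b)"
  have tpos: "0 < t" using t1 by simp
  have P: "0 < P" "0 < Q" "0 < R" using tpos u by (auto simp: P_def Q_def R_def)
  have xb: "x powr b = P*Q" unfolding xt P_def Q_def using tpos u by (simp add: powr_mult)
  have RP: "R*P = t" unfolding R_def P_def using tpos by (simp add: powr_add[symmetric])
  have "t powr (1 - b + 1) = t powr (1-b) * t powr 1" by (rule powr_add)
  then have Rt: "t powr (1 - b + 1) = R*t" unfolding R_def using tpos by simp
  have FFe: "FF (1-b) (1+K) t = R*t + (1+K)*R - (1+K)*t - 1"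
    unfolding FF_def Rt by (simp add: R_def)
  have den: "P*Q*A + Q*B > 0" using P A B by (simp add: add_pos_pos)
  have "(x = x powr b * A / (x powr b * A + u powr b * B)) \<longleftrightarrow> x*(P*Q*A + Q*B) = P*Q*A"
    unfolding xb Q_def[symmetric] using den by (simp add: field_simps)
  also have "\<dots> \<longleftrightarrow> Q*(x*(P*A + B)) = Q*(P*A)" by (simp add: algebra_simps)
  also have "\<dots> \<longleftrightarrow> x*(P*A + B) = P*A" using P by simp
  also have "\<dots> \<longleftrightarrow> u*(t*B) = u*(P*A)"
  proof -
    have e: "x*(P*A+B) - P*A*((1+t)*u) = u*(t*B) - u*(P*A)" by (simp add: xt algebra_simps)
    show ?thesis using e tu by auto
  qed
  also have "\<dots> \<longleftrightarrow> t*B = P*A" using u by simp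
  also have "\<dots> \<longleftrightarrow> P*(R*B) = P*A" using RP by (simp add: algebra_simps)
  also have "\<dots> \<longleftrightarrow> R*B = A" using P by simp
  also have "\<dots> \<longleftrightarrow> (K+2)*(R*B) = (K+2)*A" using K by simp
  also have "\<dots> \<longleftrightarrow> H*(R*(1+K*u)) = H*(1+K*x)" 
  proof -
    have "(K+2)*(R*B) = R*((K+2)*B)" by (simp add: algebra_simps)
    also have "\<dots> = H*(R*(1+K*u))" using Be by simp
    finally have E: "(K+2)*(R*B) = H*(R*(1+K*u))" .
    show ?thesis by (simp only: E Ae)
  qed
  also have "\<dots> \<longleftrightarrow> R*(1+K*u) = 1+K*x" using H by simp
  also have "\<dots> \<longleftrightarrow> (1+t)*(R*(1+K*u)) = (1+t)*(1+K*x)" using t1 by simp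
  also have "\<dots> \<longleftrightarrow> R*(1+t+K) = 1+t+K*t"
  proof -
    have "(1+t)*(R*(1+K*u)) = R*(1+t) + R*K*((1+t)*u)" by (simp add: algebra_simps)
    also have "\<dots> = R*(1+t+K)" unfolding tu by (simp add: algebra_simps)
    finally have E1: "(1+t)*(R*(1+K*u)) = R*(1+t+K)" .
    have "(1+t)*(1+K*x) = (1+t) + K*t*((1+t)*u)" unfolding xt by (simp add: algebra_simps)
    also have "\<dots> = 1+t+K*t" unfolding tu by simp
    finally have E2: "(1+t)*(1+K*x) = 1+t+K*t" .
    show ?thesis by (simp only: E1 E2)
  qed
  also have "\<dots> \<longleftrightarrow> FF (1-b) (1+K) t = 0" unfolding FFe by (simp add: algebra_simps)
  finally show ?thesis .
qed

lemma core_g: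
  fixes x t u b K :: real
  assumes u: "0 < u" and xt: "x = t*u" and tu: "(1+t)*u = 1" and t1: "1 < t"
    and b: "0 < b" "b < 1" and ux: "u = 1 - x"
  shows "((x powr (1-b) - u powr (1-b)) / (x * u powr (1-b) - u * x powr (1-b)) = K)
     \<longleftrightarrow> FF (1-b) (1+K) t = 0"
proof -
  define U where "U = u powr (1-b)"
  define R where "R = t powr (1-b)"
  have tpos: "0 < t" using t1 by simp
  have P: "0 < U" "0 < R" using tpos u by (auto simp: U_def R_def)
  have xa: "x powr (1-b) = R*U" unfolding xt R_def U_def using tpos u by (simp add: powr_mult)
  have "t powr (1 - b + 1) = t powr (1-b) * t powr 1" by (rule powr_add)
  then have Rt: "t powr (1 - b + 1) = R*t" unfolding R_def using tpos by simp
  have FFe: "FF (1-b) (1+K) t = R*t + (1+K)*R - (1+K)*t - 1"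
    unfolding FF_def Rt by (simp add: R_def)
  have "t powr (1-b) < t powr 1" using t1 b by (intro powr_less_mono) auto
  then have Rlt: "R < t" unfolding R_def using tpos by simp
  have den: "x * U - u * (R*U) = U*u*(t-R)" unfolding xt by (simp add: algebra_simps)
  have denp: "U*u*(t-R) > 0" using P u Rlt by simp
  have "((x powr (1-b) - u powr (1-b)) / (x * u powr (1-b) - u * x powr (1-b)) = K)
     \<longleftrightarrow> (R*U - U) = K*(U*u*(t-R))"
  proof -
    have "(x powr (1-b) - u powr (1-b)) / (x * u powr (1-b) - u * x powr (1-b))
        = (R*U - U) / (U*u*(t-R))" unfolding xa U_def[symmetric] den ..
    note eqn = this
    have dnz: "U*u*(t-R) \<noteq> 0" using denp by (metis less_irrefl)
    show ?thesis unfolding eqn nonzero_divide_eq_eq[OF dnz] by (rule refl)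
  qed
  also have "\<dots> \<longleftrightarrow> U*(R - 1) = U*(K*u*(t-R))" by (simp add: algebra_simps)
  also have "\<dots> \<longleftrightarrow> R - 1 = K*u*(t-R)" using P by simp
  also have "\<dots> \<longleftrightarrow> (1+t)*(R - 1) = (1+t)*(K*u*(t-R))" using t1 by simp
  also have "\<dots> \<longleftrightarrow> (1+t)*(R - 1) = K*(t-R)"
  proof -
    have "(1+t)*(K*u*(t-R)) = K*(t-R)*((1+t)*u)" by (simp add: algebra_simps)
    also have "\<dots> = K*(t-R)" unfolding tu by simp
    finally have E: "(1+t)*(K*u*(t-R)) = K*(t-R)" .
    show ?thesis by (simp only: E)
  qed
  also have "\<dots> \<longleftrightarrow> FF (1-b) (1+K) t = 0" unfolding FFe by (simp add: algebra_simps)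
  finally show ?thesis .
qed
lemma Apos: "1 < (h::real) \<Longrightarrow> 0 \<le> y \<Longrightarrow> 0 < h*y + 1 - y"
proof -
  assume "1 < h" "0 \<le> y"
  then have "0 \<le> (h-1)*y" by simp
  moreover have "h*y + 1 - y = 1 + (h-1)*y" by (simp add: algebra_simps)
  ultimately show ?thesis by linarith
qed
lemma Bpos: "1 < (h::real) \<Longrightarrow> y < 1 \<Longrightarrow> 0 < y + h - h*y"
proof -
  assume "1 < h" "y < 1"
  then have "0 < (h-1)*(1-y)" by simp
  moreover have "y + h - h*y = 1 + (h-1)*(1-y)" by (simp add: algebra_simps)
  ultimately show ?thesis by linarith
qed
lemma eq_shift: "(a::real) - b = c - d \<Longrightarrow> (a = b) = (c = d)" by auto

theorem lemmaB3:
  fixes b phi hG :: real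
  assumes "0 < b" "b < 1" "0 < phi" "phi < 1" "1 < hG"
  shows "(b \<le> 2 / (phi * (hG - 1) + 2) \<longrightarrow>
            sol_set b phi hG = {(1/2, 1/2), (1, (phi * hG + 1) / (phi * hG + 2 - phi))})
       \<and> (2 / (phi * (hG - 1) + 2) < b \<longrightarrow>
            sol_set b phi hG = {(1/2, 1/2), (1, (phi * hG + 1) / (phi * hG + 2 - phi)),
              (xhat phi hG b,
               (phi * (hG + 1) * xhat phi hG b + 1 - phi) / (phi * hG + 2 - phi))})"
proof -
  define K where "K = phi*(hG-1)"
  define D where "D = phi*hG + 2 - phi"
  define Y where "Y = (\<lambda>x. (phi*(hG+1)*x + 1 - phi)/D)"
  define E1 where "E1 = (\<lambda>x y. x = x powr b * (hG * y + 1 - y) /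
         (x powr b * (hG * y + 1 - y) + (1 - x) powr b * (y + hG - hG * y)))"
  have K0: "0 < K" using assms by (simp add: K_def)
  have DK: "D = K+2" by (simp add: D_def K_def algebra_simps)
  have D0: "0 < D" using K0 DK by simp
  have DY: "D * Y x = phi*(hG+1)*x + 1 - phi" for x using D0 by (simp add: Y_def)
  have eq2: "(y = phi * x + (1 - phi) / (hG + 1) * (hG * y + 1 - y)) \<longleftrightarrow> y = Y x" for x y
  proof -
    have h1: "hG + 1 > 0" using assms by simp
    have "(y = phi * x + (1 - phi) / (hG + 1) * (hG * y + 1 - y)) \<longleftrightarrow>
          (hG+1)*y = (hG+1)*(phi*x) + (1-phi)*(hG*y+1-y)"
      using h1 by (simp add: field_simps)
    also have "\<dots> \<longleftrightarrow> D*y = phi*(hG+1)*x + 1 - phi"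
      by (rule eq_shift) (simp add: D_def algebra_simps)
    also have "\<dots> \<longleftrightarrow> D*y = D*Y x" using DY by simp
    also have "\<dots> \<longleftrightarrow> y = Y x" using D0 by simp
    finally show ?thesis .
  qed
  have Yx: "D * Y x - D * x = (1-phi)*(1-2*x)" for x
    unfolding DY by (simp add: D_def algebra_simps)
  have Yh: "D * Y x - D * (1/2) = phi*(hG+1)*(x-1/2)" for x
    unfolding DY by (simp add: D_def algebra_simps)
  have Ylo: "1/2 \<le> Y x \<longleftrightarrow> 1/2 \<le> x" for x
  proof -
    have "1/2 \<le> Y x \<longleftrightarrow> D*(1/2) \<le> D*Y x" using D0 by simp
    also have "\<dots> \<longleftrightarrow> 0 \<le> phi*(hG+1)*(x-1/2)" using Yh[of x] by linarith
    also have "\<dots> \<longleftrightarrow> 1/2 \<le> x" proof -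
      have pos: "phi*(hG+1) > 0" using assms by simp
      have "0 \<le> phi*(hG+1)*(x-1/2) \<longleftrightarrow> phi*(hG+1)*0 \<le> phi*(hG+1)*(x-1/2)" by simp
      also have "\<dots> \<longleftrightarrow> 0 \<le> x-1/2" by (rule mult_le_cancel_left_pos[OF pos])
      finally show ?thesis by simp
    qed
    finally show ?thesis .
  qed
  have Yup: "Y x \<le> x \<longleftrightarrow> 1/2 \<le> x" for x
  proof -
    have "Y x \<le> x \<longleftrightarrow> D*Y x \<le> D*x" using D0 by simp
    also have "\<dots> \<longleftrightarrow> (1-phi)*(1-2*x) \<le> 0" using Yx[of x] by linarith
    also have "\<dots> \<longleftrightarrow> 1/2 \<le> x" using assms by (auto simp: mult_le_0_iff)
    finally show ?thesis .
  qed
  have Yhalf: "Y (1/2) = 1/2" using Yh[of "1/2"] D0 by simp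
  have Yone: "Y 1 = (phi * hG + 1) / (phi * hG + 2 - phi)"
    by (simp add: Y_def D_def algebra_simps)
  have E1half: "E1 (1/2) (1/2)"
  proof -
    have p: "(1/2::real) powr b > 0" by simp
    have q: "hG * (1/2) + 1 - 1/2 > 0" using assms by simp
    have B: "1/2 + hG - hG * (1/2) = hG * (1/2) + 1 - (1/2::real)" by simp
    define z where "z = (1/2::real) powr b * (hG * (1/2) + 1 - 1/2)"
    have z: "z > 0" using p q by (simp add: z_def)
    have "(1/2::real) = z / (z + z)" using z by simp
    then show ?thesis unfolding E1_def B z_def by simp
  qed
  have E1one: "E1 1 y" if "0 \<le> y" for y
  proof -
    have "hG * y + 1 - y > 0" using assms that by (intro Apos)
    then show ?thesis unfolding E1_def using assms by simp
  qed
  have mid: "E1 x (Y x) \<longleftrightarrow> FF (1-b) (1+K) (x/(1-x)) = 0" if x: "1/2 < x" "x < 1" for x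
    unfolding E1_def
  proof (rule core_eq1)
    show "0 < 1 - x" using x by simp
    show "x = x / (1 - x) * (1 - x)" using x by simp
    show "(1 + x / (1 - x)) * (1 - x) = 1" using x by (simp add: field_simps)
    show "1 < x / (1 - x)" using x by (simp add: field_simps)
    show "0 < b" "b < 1" using assms by auto
    have y0: "1/2 \<le> Y x" "Y x \<le> x" using Ylo[of x] Yup[of x] x by auto
    have y1: "1/2 \<le> Y x" "Y x < 1" using y0 x by linarith+
    show "0 < hG * Y x + 1 - Y x" using y1 assms by (intro Apos) auto
    show "0 < Y x + hG - hG * Y x" using y1 assms by (intro Bpos) auto
    show "0 < hG + 1" using assms by simp
    show "0 \<le> K" using K0 by simp
    have a: "(K+2)*(hG * Y x + 1 - Y x) = (K+2) + (hG-1)*(D*Y x)" unfolding DK by (simp add: algebra_simps)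
    show "(K + 2) * (hG * Y x + 1 - Y x) = (hG + 1) * (1 + K * x)"
      unfolding a DY by (simp add: K_def algebra_simps)
    have bb: "(K+2)*(Y x + hG - hG * Y x) = (K+2)*hG - (hG-1)*(D*Y x)" unfolding DK by (simp add: algebra_simps)
    show "(K + 2) * (Y x + hG - hG * Y x) = (hG + 1) * (1 + K * (1 - x))"
      unfolding bb DY by (simp add: K_def algebra_simps)
  qed
  have gmid: "g x b = K \<longleftrightarrow> FF (1-b) (1+K) (x/(1-x)) = 0" if x: "1/2 < x" "x < 1" for x
  proof -
    have "g x b = (x powr (1-b) - (1-x) powr (1-b)) / (x * (1-x) powr (1-b) - (1-x) * x powr (1-b))"
      using x by (simp add: g_def)
    moreover have "((x powr (1-b) - (1-x) powr (1-b)) / (x * (1-x) powr (1-b) - (1-x) * x powr (1-b)) = K)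
     \<longleftrightarrow> FF (1-b) (1+K) (x/(1-x)) = 0"
      by (rule core_g) (use x assms in \<open>auto simp: field_simps\<close>)
    ultimately show ?thesis by simp
  qed
  have mem: "(x, y) \<in> sol_set b phi hG \<longleftrightarrow> y = Y x \<and> 1/2 \<le> x \<and> x \<le> 1 \<and>
      (x = 1/2 \<or> x = 1 \<or> (x < 1 \<and> 1/2 < x \<and> FF (1-b) (1+K) (x/(1-x)) = 0))" for x y
  proof -
    have "(x, y) \<in> sol_set b phi hG \<longleftrightarrow> 1/2 \<le> y \<and> y \<le> x \<and> x \<le> 1 \<and> E1 x y \<and> y = Y x"
      unfolding sol_set_def E1_def eq2[symmetric] by simp
    also have "\<dots> \<longleftrightarrow> y = Y x \<and> 1/2 \<le> x \<and> x \<le> 1 \<and> E1 x (Y x)"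
      using Ylo Yup by auto
    also have "\<dots> \<longleftrightarrow> y = Y x \<and> 1/2 \<le> x \<and> x \<le> 1 \<and>
      (x = 1/2 \<or> x = 1 \<or> (x < 1 \<and> 1/2 < x \<and> FF (1-b) (1+K) (x/(1-x)) = 0))"
    proof
      assume h: "y = Y x \<and> 1/2 \<le> x \<and> x \<le> 1 \<and> E1 x (Y x)"
      show "y = Y x \<and> 1/2 \<le> x \<and> x \<le> 1 \<and>
        (x = 1/2 \<or> x = 1 \<or> (x < 1 \<and> 1/2 < x \<and> FF (1-b) (1+K) (x/(1-x)) = 0))"
      proof (cases "x = 1/2 \<or> x = 1")
        case False
        then have "1/2 < x" "x < 1" using h by auto
        then show ?thesis using h mid by auto
      qed (use h in auto)
    next
      assume h: "y = Y x \<and> 1/2 \<le> x \<and> x \<le> 1 \<and>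
        (x = 1/2 \<or> x = 1 \<or> (x < 1 \<and> 1/2 < x \<and> FF (1-b) (1+K) (x/(1-x)) = 0))"
      have "E1 x (Y x)"
      proof -
        { assume xh: "x = 1/2" have ?thesis unfolding xh Yhalf by (rule E1half) }
        moreover
        { assume x1: "x = 1" have ?thesis unfolding x1 using Ylo[of 1] by (intro E1one) simp }
        moreover
        { assume "x < 1 \<and> 1/2 < x \<and> FF (1-b) (1+K) (x/(1-x)) = 0"
          then have ?thesis using mid by auto }
        ultimately show ?thesis using h by blast
      qed
      then show "y = Y x \<and> 1/2 \<le> x \<and> x \<le> 1 \<and> E1 x (Y x)" using h by blast
    qed
    finally show ?thesis .
  qed
  have cond: "b \<le> 2 / (phi * (hG - 1) + 2) \<longleftrightarrow> (1+K)*(1-(1-b)) \<le> 1 + (1-b)"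
    unfolding K_def[symmetric] using K0 by (simp add: field_simps)
  have cond2: "2 / (phi * (hG - 1) + 2) < b \<longleftrightarrow> (1+K)*(1-(1-b)) > 1 + (1-b)"
    unfolding K_def[symmetric] using K0 by (simp add: field_simps)
  have t1: "1 < x/(1-x)" if "1/2 < x" "x < 1" for x::real using that by (simp add: field_simps)
  have memh: "(1/2, 1/2) \<in> sol_set b phi hG" unfolding mem using Yhalf by simp
  have mem1: "(1, Y 1) \<in> sol_set b phi hG" unfolding mem by simp
  have fwd: "(x,y) = (1/2,1/2) \<or> (x,y) = (1, Y 1) \<or>
      (x < 1 \<and> 1/2 < x \<and> FF (1-b) (1+K) (x/(1-x)) = 0 \<and> y = Y x)"
    if m: "(x,y) \<in> sol_set b phi hG" for x y
  proof -
    from m[unfolded mem] have A: "y = Y x" and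
      B: "x = 1/2 \<or> x = 1 \<or> (x < 1 \<and> 1/2 < x \<and> FF (1-b) (1+K) (x/(1-x)) = 0)" by blast+
    { assume xh: "x = 1/2" have "(x,y) = (1/2,1/2)" by (simp only: xh A Yhalf) }
    moreover
    { assume x1: "x = 1" have "(x,y) = (1, Y 1)" by (simp only: x1 A) }
    ultimately show ?thesis using A B by blast
  qed
  show ?thesis
  proof (intro conjI impI)
    assume "b \<le> 2 / (phi * (hG - 1) + 2)"
    then have c: "(1+K)*(1-(1-b)) \<le> 1 + (1-b)" using cond by simp
    have nz: "FF (1-b) (1+K) (x/(1-x)) \<noteq> 0" if "1/2 < x" "x < 1" for x
      using FF_case1[OF _ c t1[OF that]] assms by simp
    show "sol_set b phi hG = {(1/2, 1/2), (1, (phi * hG + 1) / (phi * hG + 2 - phi))}"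
    proof (rule set_eqI)
      fix p :: "real \<times> real"
      obtain x y where p: "p = (x,y)" by (cases p)
      show "p \<in> sol_set b phi hG \<longleftrightarrow> p \<in> {(1/2, 1/2), (1, (phi * hG + 1) / (phi * hG + 2 - phi))}"
        unfolding p Yone[symmetric] insert_iff empty_iff using fwd[of x y] nz[of x] memh mem1 by metis
    qed
  next
    assume "2 / (phi * (hG - 1) + 2) < b"
    then have c: "(1+K)*(1-(1-b)) > 1 + (1-b)" using cond2 by simp
    obtain r where r: "1 < r" "FF (1-b) (1+K) r = 0"
      and ru: "\<And>s. 1 < s \<Longrightarrow> FF (1-b) (1+K) s = 0 \<Longrightarrow> s = r"
      using FF_case2[of "1-b" "1+K"] c assms K0 by auto
    define x0 where "x0 = r/(1+r)"
    have x0: "1/2 < x0" "x0 < 1" using r by (auto simp: x0_def field_simps)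
    have x0r: "x0/(1-x0) = r" using r by (simp add: x0_def field_simps)
    have char: "1/2 < x \<and> x < 1 \<and> FF (1-b) (1+K) (x/(1-x)) = 0 \<longleftrightarrow> x = x0" for x
    proof
      assume h: "1/2 < x \<and> x < 1 \<and> FF (1-b) (1+K) (x/(1-x)) = 0"
      then have "x/(1-x) = r" using ru t1 by blast
      then show "x = x0" using h r by (simp add: x0_def field_simps)
    qed (use x0 x0r r in auto)
    have xh: "xhat phi hG b = x0"
      unfolding xhat_def K_def[symmetric]
    proof (rule the_equality)
      show "1/2 < x0 \<and> x0 < 1 \<and> g x0 b = K" using gmid[OF x0] x0r r x0 by simp
      fix x assume "1/2 < x \<and> x < 1 \<and> g x b = K"
      then show "x = x0" using gmid char by blast
    qed
    have memx0: "(x0, Y x0) \<in> sol_set b phi hG"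
      unfolding mem using char[of x0] x0 by auto
    show "sol_set b phi hG = {(1/2, 1/2), (1, (phi * hG + 1) / (phi * hG + 2 - phi)),
              (xhat phi hG b,
               (phi * (hG + 1) * xhat phi hG b + 1 - phi) / (phi * hG + 2 - phi))}"
    proof (rule set_eqI)
      fix p :: "real \<times> real"
      obtain x y where p: "p = (x,y)" by (cases p)
      have Yx0: "(phi * (hG + 1) * x0 + 1 - phi) / (phi * hG + 2 - phi) = Y x0"
        by (simp add: Y_def D_def)
      show "p \<in> sol_set b phi hG \<longleftrightarrow> p \<in> {(1/2, 1/2), (1, (phi * hG + 1) / (phi * hG + 2 - phi)),
              (xhat phi hG b,
               (phi * (hG + 1) * xhat phi hG b + 1 - phi) / (phi * hG + 2 - phi))}"
        unfolding p xh Yx0 Yone[symmetric] insert_iff empty_iff using fwd[of x y] char[of x] memh mem1 memx0 by metis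
    qed
  qed
qed
end
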